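(* Let $G=(V,E)$ be a finite connected graph with $n$ vertices and edges $e_1,\dots,e_m$, each edge given an orientation, and let $h=m-n+1$. Let $\partial:\mathbb{R}^E\to\mathbb{R}^V$ be the boundary map $e\mapsto \partial^+(e)-\partial^-(e)$ (head minus tail), so that $H_1(G,\mathbb{Z})=\ker(\partial)\cap\mathbb{Z}^E$ is free of rank $h$. Fix a $\mathbb{Z}$-basis $\gamma_1,\dots,\gamma_h$ of $H_1(G,\mathbb{Z})$ and let $M$ be the $h\times m$ real matrix whose $i$-th row is the coordinate vector of $\gamma_i$ in the standard basis $e_1,\dots,e_m$ of $\mathbb{R}^E$. Let $\mathbf{p}\in\mathbb{R}^V$ be a nonzero vector whose coordinates sum to $0$, let $\omega\in\mathbb{R}^E$ with $\partial(\omega)=\mathbf{p}$, and let $N$ be the $(h+1)\times m$ matrix whose rows are the coordinate vectors of $\gamma_1,\dots,\gamma_h,\omega$. Let $U$ be a topological space, $y_1,\dots,y_m:U\to\mathbb{R}_{>0}$ continuous functions, and $Y=\mathrm{diag}(y_1,\dots,y_m)$. Let $A:U\to\mathrm{Mat}_{m\times m}(\mathbb{R})$ be a map such that (i) there is $C>0$ with all entries of $A(s)$ in $[-C,C]$ for all $s\in U$, and (ii) the matrices $M(Y+A)M^\tau$ and $N(Y+A)N^\tau$ are invertible at every point of $U$. Then $$\frac{\det(N(Y+A)N^\tau)}{\det(M(Y+A)M^\tau)}-\frac{\det(NYN^\tau)}{\det(MYM^\tau)}=O_{\underline y}(1).$$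
   Context: Notation: for real functions $F_1,F_2$ on $U$, $F_1=O_{\underline y}(F_2)$ means there exist constants $c,C'>0$ such that $|F_1(s)|\le c|F_2(s)|$ for all $s\in U$ with $y_1(s),\dots,y_m(s)\ge C'$. All matrices are evaluated pointwise at $s\in U$; $X^\tau$ denotes the transpose. *)

theory Defs
  imports Main "Jordan_Normal_Form.Determinant"
begin

text \<open>Graph: vertices 0..<n, oriented edges 0..<m, edge j goes from tal j to hed j.
  Loops and multiple edges are allowed.\<close>

definition adj :: "(nat \<Rightarrow> nat) \<Rightarrow> (nat \<Rightarrow> nat) \<Rightarrow> nat \<Rightarrow> nat \<Rightarrow> nat \<Rightarrow> bool" where
  "adj hed tal m u v \<longleftrightarrow> (\<exists>j<m. (tal j = u \<and> hed j = v) \<or> (tal j = v \<and> hed j = u))"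

definition graph_connected :: "nat \<Rightarrow> nat \<Rightarrow> (nat \<Rightarrow> nat) \<Rightarrow> (nat \<Rightarrow> nat) \<Rightarrow> bool" where
  "graph_connected n m hed tal \<longleftrightarrow> (\<forall>u<n. \<forall>v<n. (adj hed tal m)\<^sup>*\<^sup>* u v)"

definition bdry :: "nat \<Rightarrow> (nat \<Rightarrow> nat) \<Rightarrow> (nat \<Rightarrow> nat) \<Rightarrow> (nat \<Rightarrow> 'a::comm_ring_1) \<Rightarrow> nat \<Rightarrow> 'a" where
  "bdry m hed tal x v = (\<Sum>j<m. (if hed j = v then x j else 0) - (if tal j = v then x j else 0))"

definition is_cycle :: "nat \<Rightarrow> nat \<Rightarrow> (nat \<Rightarrow> nat) \<Rightarrow> (nat \<Rightarrow> nat) \<Rightarrow> (nat \<Rightarrow> int) \<Rightarrow> bool" where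
  "is_cycle n m hed tal z \<longleftrightarrow> (\<forall>v<n. bdry m hed tal z v = 0)"

definition is_H1_basis :: "nat \<Rightarrow> nat \<Rightarrow> (nat \<Rightarrow> nat) \<Rightarrow> (nat \<Rightarrow> nat) \<Rightarrow> nat \<Rightarrow> (nat \<Rightarrow> nat \<Rightarrow> int) \<Rightarrow> bool" where
  "is_H1_basis n m hed tal h \<gamma> \<longleftrightarrow>
     (\<forall>i<h. is_cycle n m hed tal (\<gamma> i)) \<and>
     (\<forall>z. is_cycle n m hed tal z \<longrightarrow> (\<exists>c::nat \<Rightarrow> int. \<forall>j<m. z j = (\<Sum>i<h. c i * \<gamma> i j))) \<and>
     (\<forall>c::nat \<Rightarrow> int. (\<forall>j<m. (\<Sum>i<h. c i * \<gamma> i j) = 0) \<longrightarrow> (\<forall>i<h. c i = 0))"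

definition diagm :: "nat \<Rightarrow> (nat \<Rightarrow> real) \<Rightarrow> real mat" where
  "diagm m d = mat m m (\<lambda>(i,j). if i = j then d i else 0)"

end

theory Submission
  imports Defs
begin


lemma entry_PXQ:
  fixes P X Q :: "'a::comm_ring_1 mat"
  assumes P: "P \<in> carrier_mat r m" and X: "X \<in> carrier_mat m m" and Q: "Q \<in> carrier_mat r' m"
    and i: "i < r" and k: "k < r'"
  shows "(P * X * transpose_mat Q) $$ (i,k) = (\<Sum>j<m. \<Sum>l<m. P$$(i,j) * X$$(j,l) * Q$$(k,l))"
proof -
  have "(P * X * transpose_mat Q) $$ (i,k) = (\<Sum>j<m. P$$(i,j) * (\<Sum>l<m. X$$(j,l) * Q$$(k,l)))"
    using P X Q i k by (simp add: scalar_prod_def lessThan_atLeast0)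
  thus ?thesis by (simp add: sum_distrib_left mult.assoc)
qed

lemma det_schur:
  fixes h m :: nat and \<gamma> :: "nat \<Rightarrow> nat \<Rightarrow> int" and \<omega> x lam :: "nat \<Rightarrow> real" and X :: "real mat"
  defines "M \<equiv> mat h m (\<lambda>(i,j). real_of_int (\<gamma> i j))"
  defines "N \<equiv> mat (h + 1) m (\<lambda>(i,j). if i < h then real_of_int (\<gamma> i j) else \<omega> j)"
  assumes X: "X \<in> carrier_mat m m"
    and xdef: "\<forall>j<m. x j = \<omega> j - (\<Sum>k<h. lam k * real_of_int (\<gamma> k j))"
    and orth: "\<forall>i<h. (\<Sum>j<m. \<Sum>l<m. real_of_int (\<gamma> i j) * X$$(j,l) * x l) = 0"
  shows "det (N * X * transpose_mat N) = det (M * X * transpose_mat M) * (\<Sum>j<m. \<Sum>l<m. x j * X$$(j,l) * x l)"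
proof -
  define L where "L = mat (h+1) (h+1) (\<lambda>(i,k). if i = k then 1 else if i = h \<and> k < h then - lam k else (0::real))"
  define N' where "N' = mat (h+1) m (\<lambda>(i,j). if i < h then real_of_int (\<gamma> i j) else x j)"
  have L: "L \<in> carrier_mat (h+1) (h+1)" unfolding L_def by simp
  have Nc: "N \<in> carrier_mat (h+1) m" unfolding N_def by simp
  have Mc: "M \<in> carrier_mat h m" unfolding M_def by simp
  have N'c: "N' \<in> carrier_mat (h+1) m" unfolding N'_def by simp
  have LN: "L * N = N'"
  proof (rule eq_matI)
    fix i j assume i: "i < dim_row N'" and j: "j < dim_col N'"
    hence i: "i < h+1" and j: "j < m" unfolding N'_def by auto
    have "(L * N) $$ (i,j) = (\<Sum>k<h+1. L $$ (i,k) * N $$ (k,j))"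
      using i j L Nc by (simp add: scalar_prod_def lessThan_atLeast0)
    also have "\<dots> = N' $$ (i,j)"
    proof (cases "i < h")
      case True
      have "(\<Sum>k<h+1. L $$ (i,k) * N $$ (k,j)) = (\<Sum>k<h+1. if k = i then N $$ (k,j) else 0)"
        by (rule sum.cong) (use True in \<open>auto simp: L_def\<close>)
      also have "\<dots> = N $$ (i,j)" using True by simp
      finally show ?thesis using True j by (simp add: N_def N'_def)
    next
      case False
      hence ih: "i = h" using i by simp
      have "(\<Sum>k<h+1. L $$ (i,k) * N $$ (k,j)) = (\<Sum>k<h. L $$ (i,k) * N $$ (k,j)) + L $$ (i,h) * N $$ (h,j)"
        by simp
      also have "\<dots> = (\<Sum>k<h. - lam k * real_of_int (\<gamma> k j)) + \<omega> j"
        using ih j by (auto simp: L_def N_def intro!: sum.cong)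
      also have "\<dots> = x j" using xdef j by (simp add: sum_negf)
      finally show ?thesis using ih j by (simp add: N'_def)
    qed
    finally show "(L * N) $$ (i,j) = N' $$ (i,j)" .
  qed (use L Nc N'c in auto)
  have detL: "det L = 1"
  proof -
    have "det L = prod_list (diag_mat L)"
      by (rule det_lower_triangular[OF _ L]) (auto simp: L_def)
    also have "diag_mat L = map (\<lambda>_. 1) [0..<h+1]"
      unfolding diag_mat_def using L by (auto simp: L_def)
    moreover have "prod_list (map (\<lambda>_. 1::real) xs) = 1" for xs :: "nat list" by (induct xs) auto
    ultimately show ?thesis by metis
  qed
  define B where "B = N' * X * transpose_mat N'"
  have Bc: "B \<in> carrier_mat (h+1) (h+1)" unfolding B_def using N'c X by auto
  have NXN: "N * X * transpose_mat N \<in> carrier_mat (h+1) (h+1)" using Nc X by auto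
  have "B = L * (N * X * transpose_mat N) * transpose_mat L"
  proof -
    have "B = L * N * X * (transpose_mat N * transpose_mat L)"
      unfolding B_def LN[symmetric] by (subst transpose_mult[OF L Nc], simp)
    also have "\<dots> = L * (N * X * transpose_mat N) * transpose_mat L"
    proof -
      have NX: "N * X \<in> carrier_mat (h+1) m" using Nc X by auto
      have Nt: "transpose_mat N \<in> carrier_mat m (h+1)" using Nc by auto
      have Lt: "transpose_mat L \<in> carrier_mat (h+1) (h+1)" using L by auto
      have LNX: "L * (N * X) \<in> carrier_mat (h+1) m" using L NX by auto
      have "L * N * X = L * (N * X)" using assoc_mult_mat[OF L Nc X] .
      moreover have "L * (N * X) * (transpose_mat N * transpose_mat L) = L * (N * X) * transpose_mat N * transpose_mat L"
        using assoc_mult_mat[OF LNX Nt Lt] by simp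
      moreover have "L * (N * X) * transpose_mat N = L * (N * X * transpose_mat N)"
        using assoc_mult_mat[OF L NX Nt] .
      ultimately show ?thesis by simp
    qed
    finally show ?thesis .
  qed
  moreover have Lt: "transpose_mat L \<in> carrier_mat (h+1) (h+1)" using L by auto
  ultimately have detB: "det B = det (N * X * transpose_mat N)"
    using det_mult[OF mult_carrier_mat[OF L NXN] Lt]
      det_mult[OF L NXN] det_transpose[OF L] detL by simp
  have "det B = (\<Sum>i<h+1. B $$ (i,h) * cofactor B i h)"
    by (rule laplace_expansion_column[OF Bc]) simp
  also have "\<dots> = B $$ (h,h) * cofactor B h h"
  proof -
    have "\<forall>i<h. B $$ (i,h) = 0"
    proof (intro allI impI)
      fix i assume i: "i < h"
      have "B $$ (i,h) = (\<Sum>j<m. \<Sum>l<m. N'$$(i,j) * X$$(j,l) * N'$$(h,l))"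
        unfolding B_def by (rule entry_PXQ[OF N'c X N'c]) (use i in auto)
      also have "\<dots> = (\<Sum>j<m. \<Sum>l<m. real_of_int (\<gamma> i j) * X$$(j,l) * x l)"
        using i by (auto simp: N'_def intro!: sum.cong)
      finally show "B $$ (i,h) = 0" using orth i by simp
    qed
    thus ?thesis by simp
  qed
  also have "cofactor B h h = det (M * X * transpose_mat M)"
  proof -
    have "mat_delete B h h = M * X * transpose_mat M"
    proof (rule eq_matI)
      fix i k assume "i < dim_row (M * X * transpose_mat M)" "k < dim_col (M * X * transpose_mat M)"
      hence i: "i < h" and k: "k < h" using Mc by auto
      have "mat_delete B h h $$ (i,k) = B $$ (i,k)" using i k Bc by (simp add: mat_delete_def)
      also have "\<dots> = (\<Sum>j<m. \<Sum>l<m. N'$$(i,j) * X$$(j,l) * N'$$(k,l))"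
        unfolding B_def by (rule entry_PXQ[OF N'c X N'c]) (use i k in auto)
      also have "\<dots> = (\<Sum>j<m. \<Sum>l<m. M$$(i,j) * X$$(j,l) * M$$(k,l))"
        using i k by (auto simp: N'_def M_def intro!: sum.cong)
      also have "\<dots> = (M * X * transpose_mat M) $$ (i,k)"
        by (rule entry_PXQ[OF Mc X Mc i k, symmetric])
      finally show "mat_delete B h h $$ (i,k) = (M * X * transpose_mat M) $$ (i,k)" .
    qed (use Bc Mc in auto)
    thus ?thesis unfolding cofactor_def by simp
  qed
  also have "B $$ (h,h) = (\<Sum>j<m. \<Sum>l<m. x j * X$$(j,l) * x l)"
  proof -
    have "B $$ (h,h) = (\<Sum>j<m. \<Sum>l<m. N'$$(h,j) * X$$(j,l) * N'$$(h,l))"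
      unfolding B_def by (rule entry_PXQ[OF N'c X N'c]) auto
    also have "\<dots> = (\<Sum>j<m. \<Sum>l<m. x j * X$$(j,l) * x l)"
      by (auto simp: N'_def intro!: sum.cong)
    finally show ?thesis .
  qed
  finally show ?thesis using detB by simp
qed

lemma exists_opt:
  fixes h m :: nat and \<gamma> :: "nat \<Rightarrow> nat \<Rightarrow> int" and \<omega> :: "nat \<Rightarrow> real" and X :: "real mat"
  defines "M \<equiv> mat h m (\<lambda>(i,j). real_of_int (\<gamma> i j))"
  assumes X: "X \<in> carrier_mat m m" and inv: "det (M * X * transpose_mat M) \<noteq> 0"
  shows "\<exists>lam. \<forall>i<h. (\<Sum>j<m. \<Sum>l<m. real_of_int (\<gamma> i j) * X$$(j,l) * (\<omega> l - (\<Sum>k<h. lam k * real_of_int (\<gamma> k l)))) = 0"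
proof -
  define S where "S = M * X * transpose_mat M"
  have Mc: "M \<in> carrier_mat h m" unfolding M_def by simp
  have Mt: "transpose_mat M \<in> carrier_mat m h" using Mc by simp
  have Sc: "S \<in> carrier_mat h h" unfolding S_def by (rule mult_carrier_mat[OF mult_carrier_mat[OF Mc X] Mt])
  have dS: "det S \<noteq> 0" using inv unfolding S_def .
  obtain B where Bc: "B \<in> carrier_mat h h" and SB: "S * B = 1\<^sub>m h"
    using det_non_zero_imp_unit[OF Sc dS, of "()"] unfolding Units_def ring_mat_def by auto
  define b where "b = vec h (\<lambda>i. \<Sum>j<m. \<Sum>l<m. real_of_int (\<gamma> i j) * X$$(j,l) * \<omega> l)"
  have bc: "b \<in> carrier_vec h" unfolding b_def by simp
  define v where "v = B *\<^sub>v b"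
  have Sv: "S *\<^sub>v v = b"
  proof -
    have "S *\<^sub>v v = (S * B) *\<^sub>v b" unfolding v_def by (rule assoc_mult_mat_vec[OF Sc Bc bc, symmetric])
    also have "\<dots> = b" unfolding SB using bc by simp
    finally show ?thesis .
  qed
  have vc: "v \<in> carrier_vec h" unfolding v_def using Bc unfolding carrier_vec_def by simp
  show ?thesis
  proof (intro exI allI impI)
    fix i assume i: "i < h"
    have Sik: "S $$ (i,k) = (\<Sum>j<m. \<Sum>l<m. real_of_int (\<gamma> i j) * X$$(j,l) * real_of_int (\<gamma> k l))" if k: "k < h" for k
    proof -
      have "S $$ (i,k) = (\<Sum>j<m. \<Sum>l<m. M$$(i,j) * X$$(j,l) * M$$(k,l))"
        unfolding S_def by (rule entry_PXQ[OF Mc X Mc i k])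
      thus ?thesis using i k by (simp add: M_def)
    qed
    have "b $ i = (S *\<^sub>v v) $ i" using Sv by simp
    also have "\<dots> = (\<Sum>k<h. S $$ (i,k) * v $ k)"
      using Sc vc i by (simp add: scalar_prod_def lessThan_atLeast0)
    also have "\<dots> = (\<Sum>k<h. (\<Sum>j<m. \<Sum>l<m. real_of_int (\<gamma> i j) * X$$(j,l) * real_of_int (\<gamma> k l)) * v $ k)"
      by (intro sum.cong refl) (simp add: Sik)
    also have "\<dots> = (\<Sum>j<m. \<Sum>l<m. real_of_int (\<gamma> i j) * X$$(j,l) * (\<Sum>k<h. v $ k * real_of_int (\<gamma> k l)))"
    proof -
      have "(\<Sum>k<h. (\<Sum>j<m. \<Sum>l<m. real_of_int (\<gamma> i j) * X$$(j,l) * real_of_int (\<gamma> k l)) * v $ k)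
         = (\<Sum>k<h. \<Sum>j<m. \<Sum>l<m. real_of_int (\<gamma> i j) * X$$(j,l) * (v $ k * real_of_int (\<gamma> k l)))"
        unfolding sum_distrib_right by (intro sum.cong refl) (simp add: mult.commute mult.left_commute)
      also have "\<dots> = (\<Sum>j<m. \<Sum>k<h. \<Sum>l<m. real_of_int (\<gamma> i j) * X$$(j,l) * (v $ k * real_of_int (\<gamma> k l)))"
        by (rule sum.swap)
      also have "\<dots> = (\<Sum>j<m. \<Sum>l<m. \<Sum>k<h. real_of_int (\<gamma> i j) * X$$(j,l) * (v $ k * real_of_int (\<gamma> k l)))"
        by (rule sum.cong[OF refl], rule sum.swap)
      also have "\<dots> = (\<Sum>j<m. \<Sum>l<m. real_of_int (\<gamma> i j) * X$$(j,l) * (\<Sum>k<h. v $ k * real_of_int (\<gamma> k l)))"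
        by (simp add: sum_distrib_left)
      finally show ?thesis .
    qed
    finally have e: "b $ i = (\<Sum>j<m. \<Sum>l<m. real_of_int (\<gamma> i j) * X$$(j,l) * (\<Sum>k<h. v $ k * real_of_int (\<gamma> k l)))" .
    have "(\<Sum>j<m. \<Sum>l<m. real_of_int (\<gamma> i j) * X$$(j,l) * (\<omega> l - (\<Sum>k<h. v $ k * real_of_int (\<gamma> k l))))
       = b $ i - (\<Sum>j<m. \<Sum>l<m. real_of_int (\<gamma> i j) * X$$(j,l) * (\<Sum>k<h. v $ k * real_of_int (\<gamma> k l)))"
      using i unfolding b_def right_diff_distrib sum_subtractf by simp
    thus "(\<Sum>j<m. \<Sum>l<m. real_of_int (\<gamma> i j) * X$$(j,l) * (\<omega> l - (\<Sum>k<h. (\<lambda>k. v $ k) k * real_of_int (\<gamma> k l)))) = 0"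
      using e by linarith
  qed
qed



lemma bdry_alt: "bdry m hed tal x v = (\<Sum>j<m. x j * (of_bool (hed j = v) - of_bool (tal j = v)))"
  unfolding bdry_def by (intro sum.cong refl) auto

lemma bdry_add_delta:
  assumes j: "j < m"
  shows "bdry m hed tal (\<lambda>k. z k + (if k = j then t else 0)) v
       = bdry m hed tal z v + t * (of_bool (hed j = v) - of_bool (tal j = v))"
proof -
  have "bdry m hed tal (\<lambda>k. z k + (if k = j then t else 0)) v
     = (\<Sum>k<m. z k * (of_bool (hed k = v) - of_bool (tal k = v)))
       + (\<Sum>k<m. (if k = j then t * (of_bool (hed k = v) - of_bool (tal k = v)) else 0))"
    unfolding bdry_alt sum.distrib[symmetric] by (intro sum.cong refl) (auto simp: distrib_right)
  also have "(\<Sum>k<m. (if k = j then t * (of_bool (hed k = v) - of_bool (tal k = v)) else 0))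
      = t * (of_bool (hed j = v) - of_bool (tal j = v))"
    using j by (simp add: sum.delta)
  finally show ?thesis unfolding bdry_alt .
qed

lemma flow_bound:
  fixes x y p :: "nat \<Rightarrow> real" and \<gamma> :: "nat \<Rightarrow> nat \<Rightarrow> int"
  assumes edges: "\<forall>j<m. hed j < n \<and> tal j < n"
    and span: "\<forall>z. is_cycle n m hed tal z \<longrightarrow> (\<exists>c::nat\<Rightarrow>int. \<forall>j<m. z j = (\<Sum>i<h. c i * \<gamma> i j))"
    and orth: "\<forall>i<h. (\<Sum>j<m. y j * x j * real_of_int (\<gamma> i j)) = 0"
    and ypos: "\<forall>j<m. y j > 0"
    and bd: "\<forall>v<n. bdry m hed tal x v = p v"
    and e: "e < m"
  shows "\<bar>x e\<bar> \<le> (\<Sum>v<n. \<bar>p v\<bar>)"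
proof (cases "x e = 0")
  case True thus ?thesis by (simp add: sum_nonneg)
next
  case xe: False
  define F where "F u w \<longleftrightarrow> (\<exists>j<m. (x j > 0 \<and> tal j = u \<and> hed j = w) \<or> (x j < 0 \<and> hed j = u \<and> tal j = w))" for u w
  have path: "\<exists>z::nat\<Rightarrow>int. (\<forall>v. bdry m hed tal z v = of_bool (v = b') - of_bool (v = a')) \<and> (\<forall>j. real_of_int (z j) * x j \<ge> 0)"
    if "F\<^sup>*\<^sup>* a' b'" for a' b'
    using that
  proof (induction rule: rtranclp_induct)
    case base
    show ?case by (rule exI[of _ "\<lambda>_. 0"]) (simp add: bdry_def)
  next
    case (step b c)
    from step.IH obtain z where z1: "\<forall>v. bdry m hed tal z v = of_bool (v = b) - of_bool (v = a')"
      and z2: "\<forall>j. real_of_int (z j) * x j \<ge> 0" by blast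
    from step.hyps(2) obtain j where j: "j < m" and
      jc: "(x j > 0 \<and> tal j = b \<and> hed j = c) \<or> (x j < 0 \<and> hed j = b \<and> tal j = c)"
      unfolding F_def by blast
    define t :: int where "t = (if x j > 0 then 1 else -1)"
    define z' where "z' = (\<lambda>k. z k + (if k = j then t else 0))"
    have "\<forall>v. bdry m hed tal z' v = of_bool (v = c) - of_bool (v = a')"
    proof
      fix v
      have eq: "bdry m hed tal z' v = bdry m hed tal z v + t * (of_bool (hed j = v) - of_bool (tal j = v))"
        unfolding z'_def by (rule bdry_add_delta[OF j])
      show "bdry m hed tal z' v = of_bool (v = c) - of_bool (v = a')"
        using eq z1 jc by (auto simp: t_def)
    qed
    moreover have "\<forall>k. real_of_int (z' k) * x k \<ge> 0"
    proof
      fix k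
      show "real_of_int (z' k) * x k \<ge> 0"
      proof (cases "k = j")
        case True
        have "real_of_int (z' k) * x k = real_of_int (z j) * x j + real_of_int t * x j"
          unfolding z'_def using True by (simp add: distrib_right)
        moreover have "real_of_int t * x j \<ge> 0" using jc by (auto simp: t_def)
        ultimately show ?thesis using z2 by simp
      qed (use z2 in \<open>simp add: z'_def\<close>)
    qed
    ultimately show ?case by blast
  qed
  obtain a b where ab: "(x e > 0 \<and> a = tal e \<and> b = hed e) \<or> (x e < 0 \<and> a = hed e \<and> b = tal e)"
  proof (cases "x e > 0")
    case True thus ?thesis using that by blast
  next
    case False hence "x e < 0" using xe by simp
    thus ?thesis using that by blast
  qed
  have abn: "a < n" "b < n" using ab edges e by auto
  have nocyc: "\<not> F\<^sup>*\<^sup>* b a"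
  proof
    assume "F\<^sup>*\<^sup>* b a"
    from path[OF this] obtain z where z1: "\<forall>v. bdry m hed tal z v = of_bool (v = a) - of_bool (v = b)"
      and z2: "\<forall>j. real_of_int (z j) * x j \<ge> 0" by blast
    define t :: int where "t = (if x e > 0 then 1 else -1)"
    define z' where "z' = (\<lambda>k. z k + (if k = e then t else 0))"
    have "\<forall>v. bdry m hed tal z' v = 0"
    proof
      fix v
      have eq: "bdry m hed tal z' v = bdry m hed tal z v + t * (of_bool (hed e = v) - of_bool (tal e = v))"
        unfolding z'_def by (rule bdry_add_delta[OF e])
      show "bdry m hed tal z' v = 0"
        using eq z1 ab by (auto simp: t_def)
    qed
    hence "is_cycle n m hed tal z'" unfolding is_cycle_def by simp
    with span obtain c :: "nat \<Rightarrow> int" where c: "\<forall>j<m. z' j = (\<Sum>i<h. c i * \<gamma> i j)" by blast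
    have "(\<Sum>j<m. y j * x j * real_of_int (z' j)) = (\<Sum>j<m. \<Sum>i<h. real_of_int (c i) * (y j * x j * real_of_int (\<gamma> i j)))"
      using c by (intro sum.cong refl) (simp add: sum_distrib_left mult_ac)
    also have "\<dots> = (\<Sum>i<h. real_of_int (c i) * (\<Sum>j<m. y j * x j * real_of_int (\<gamma> i j)))"
      by (subst sum.swap) (simp add: sum_distrib_left)
    also have "\<dots> = 0" using orth by simp
    finally have s0: "(\<Sum>j<m. y j * x j * real_of_int (z' j)) = 0" .
    have "0 < (\<Sum>j<m. y j * x j * real_of_int (z' j))"
    proof (rule sum_pos2)
      show "finite {..<m}" by simp
      show "e \<in> {..<m}" using e by simp
      have "real_of_int (z' e) * x e = real_of_int (z e) * x e + real_of_int t * x e"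
        unfolding z'_def by (simp add: distrib_right)
      moreover have "real_of_int t * x e > 0" using ab by (auto simp: t_def)
      moreover have "real_of_int (z e) * x e \<ge> 0" using z2 by blast
      ultimately have "real_of_int (z' e) * x e > 0" by linarith
      moreover have "y e > 0" using ypos e by simp
      ultimately show "0 < y e * x e * real_of_int (z' e)"
        by (metis mult.assoc mult.commute mult_pos_pos)
      fix j assume "j \<in> {..<m}"
      have "real_of_int (z' j) * x j \<ge> 0"
      proof (cases "j = e")
        case True thus ?thesis using \<open>real_of_int (z' e) * x e > 0\<close> by simp
      qed (use z2 in \<open>simp add: z'_def\<close>)
      thus "0 \<le> y j * x j * real_of_int (z' j)" using ypos \<open>j \<in> {..<m}\<close>
        by (metis lessThan_iff mult.assoc mult.commute mult_nonneg_nonneg order_less_imp_le)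
    qed
    with s0 show False by simp
  qed
  define R where "R = {v. v < n \<and> F\<^sup>*\<^sup>* b v}"
  have Rfin: "finite R" unfolding R_def by simp
  have Rsub: "R \<subseteq> {..<n}" unfolding R_def by auto
  define t where "t j = x j * (of_bool (hed j \<in> R) - of_bool (tal j \<in> R))" for j
  have sumR: "(\<Sum>v\<in>R. p v) = (\<Sum>j<m. t j)"
  proof -
    have "(\<Sum>v\<in>R. p v) = (\<Sum>v\<in>R. \<Sum>j<m. x j * (of_bool (hed j = v) - of_bool (tal j = v)))"
      using bd Rsub by (intro sum.cong refl) (auto simp: bdry_alt)
    also have "\<dots> = (\<Sum>j<m. \<Sum>v\<in>R. x j * (of_bool (hed j = v) - of_bool (tal j = v)))"
      by (rule sum.swap)
    also have "\<dots> = (\<Sum>j<m. t j)"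
    proof (intro sum.cong refl)
      fix j
      have "(\<Sum>v\<in>R. x j * (of_bool (hed j = v) - of_bool (tal j = v)))
          = x j * ((\<Sum>v\<in>R. of_bool (hed j = v)) - (\<Sum>v\<in>R. of_bool (tal j = v)))"
        by (simp add: sum_distrib_left sum_subtractf right_diff_distrib)
      also have "(\<Sum>v\<in>R. of_bool (hed j = v) :: real) = of_bool (hed j \<in> R)"
        using Rfin by (simp add: of_bool_def sum.delta)
      also have "(\<Sum>v\<in>R. of_bool (tal j = v) :: real) = of_bool (tal j \<in> R)"
        using Rfin by (simp add: of_bool_def sum.delta)
      finally show "(\<Sum>v\<in>R. x j * (of_bool (hed j = v) - of_bool (tal j = v))) = t j"
        unfolding t_def .
    qed
    finally show ?thesis .
  qed
  have tnn: "t j \<ge> 0" if j: "j < m" for j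
  proof -
    have hn: "hed j < n" and tn: "tal j < n" using edges j by auto
    consider "hed j \<in> R \<and> tal j \<notin> R" | "tal j \<in> R \<and> hed j \<notin> R" | "(hed j \<in> R) = (tal j \<in> R)" by blast
    thus ?thesis
    proof cases
      case 1
      have "x j \<ge> 0"
      proof (rule ccontr)
        assume "\<not> x j \<ge> 0"
        hence "F (hed j) (tal j)" unfolding F_def using j by auto
        hence "F\<^sup>*\<^sup>* b (tal j)" using 1 unfolding R_def by (auto intro: rtranclp.rtrancl_into_rtrancl)
        thus False using 1 tn unfolding R_def by auto
      qed
      thus ?thesis using 1 by (simp add: t_def)
    next
      case 2
      have "x j \<le> 0"
      proof (rule ccontr)
        assume "\<not> x j \<le> 0"
        hence "F (tal j) (hed j)" unfolding F_def using j by auto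
        hence "F\<^sup>*\<^sup>* b (hed j)" using 2 unfolding R_def by (auto intro: rtranclp.rtrancl_into_rtrancl)
        thus False using 2 hn unfolding R_def by auto
      qed
      thus ?thesis using 2 by (simp add: t_def)
    next
      case 3 thus ?thesis by (simp add: t_def)
    qed
  qed
  have te: "t e = \<bar>x e\<bar>"
  proof -
    have bR: "b \<in> R" using abn unfolding R_def by simp
    have aR: "a \<notin> R" using nocyc unfolding R_def by simp
    show ?thesis using ab bR aR by (auto simp: t_def)
  qed
  have "\<bar>x e\<bar> \<le> (\<Sum>j<m. t j)"
    unfolding te[symmetric] by (rule member_le_sum) (use e tnn in auto)
  also have "\<dots> = (\<Sum>v\<in>R. p v)" using sumR by simp
  also have "\<dots> \<le> (\<Sum>v\<in>R. \<bar>p v\<bar>)" by (rule sum_mono) simp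
  also have "\<dots> \<le> (\<Sum>v<n. \<bar>p v\<bar>)" by (rule sum_mono2) (use Rsub in auto)
  finally show ?thesis .
qed



definition qf :: "nat \<Rightarrow> real mat \<Rightarrow> (nat \<Rightarrow> real) \<Rightarrow> (nat \<Rightarrow> real) \<Rightarrow> real" where
  "qf m X u w = (\<Sum>j<m. \<Sum>l<m. u j * X$$(j,l) * w l)"

definition n1 :: "nat \<Rightarrow> (nat \<Rightarrow> real) \<Rightarrow> real" where "n1 m u = (\<Sum>j<m. \<bar>u j\<bar>)"
definition q2 :: "nat \<Rightarrow> (nat \<Rightarrow> real) \<Rightarrow> real" where "q2 m u = (\<Sum>j<m. (u j)^2)"

lemma qf_cong: "(\<forall>j<m. u j = u' j) \<Longrightarrow> (\<forall>j<m. w j = w' j) \<Longrightarrow> qf m X u w = qf m X u' w'"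
  unfolding qf_def by (intro sum.cong refl) auto

lemma qf_add1: "qf m X (\<lambda>j. u j + u' j) w = qf m X u w + qf m X u' w"
  unfolding qf_def by (simp add: sum.distrib[symmetric] distrib_right)

lemma qf_add2: "qf m X u (\<lambda>j. w j + w' j) = qf m X u w + qf m X u w'"
  unfolding qf_def by (simp add: sum.distrib[symmetric] distrib_left)

lemma qf_addM: assumes "X \<in> carrier_mat m m" "Z \<in> carrier_mat m m"
  shows "qf m (X + Z) u w = qf m X u w + qf m Z u w"
  unfolding qf_def sum.distrib[symmetric] using assms
  by (intro sum.cong refl) (simp add: distrib_left distrib_right)

lemma qf_comb1: "qf m X (\<lambda>j. \<Sum>i<h. c i * g i j) w = (\<Sum>i<h. c i * qf m X (g i) w)"
proof -
  have "qf m X (\<lambda>j. \<Sum>i<h. c i * g i j) w = (\<Sum>j<m. \<Sum>l<m. \<Sum>i<h. c i * (g i j * X$$(j,l) * w l))"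
    unfolding qf_def by (intro sum.cong refl) (simp add: sum_distrib_left sum_distrib_right mult_ac)
  also have "\<dots> = (\<Sum>j<m. \<Sum>i<h. \<Sum>l<m. c i * (g i j * X$$(j,l) * w l))"
    by (intro sum.cong refl) (rule sum.swap)
  also have "\<dots> = (\<Sum>i<h. \<Sum>j<m. \<Sum>l<m. c i * (g i j * X$$(j,l) * w l))"
    by (rule sum.swap)
  also have "\<dots> = (\<Sum>i<h. c i * qf m X (g i) w)"
    unfolding qf_def by (simp add: sum_distrib_left)
  finally show ?thesis .
qed

lemma qf_comb2: "qf m X u (\<lambda>l. \<Sum>i<h. c i * g i l) = (\<Sum>i<h. c i * qf m X u (g i))"
proof -
  have "qf m X u (\<lambda>l. \<Sum>i<h. c i * g i l) = (\<Sum>j<m. \<Sum>l<m. \<Sum>i<h. c i * (u j * X$$(j,l) * g i l))"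
    unfolding qf_def by (intro sum.cong refl) (simp add: sum_distrib_left mult_ac)
  also have "\<dots> = (\<Sum>j<m. \<Sum>i<h. \<Sum>l<m. c i * (u j * X$$(j,l) * g i l))"
    by (intro sum.cong refl) (rule sum.swap)
  also have "\<dots> = (\<Sum>i<h. \<Sum>j<m. \<Sum>l<m. c i * (u j * X$$(j,l) * g i l))"
    by (rule sum.swap)
  also have "\<dots> = (\<Sum>i<h. c i * qf m X u (g i))"
    unfolding qf_def by (simp add: sum_distrib_left)
  finally show ?thesis .
qed

lemma qf_diag: "qf m (diagm m d) u w = (\<Sum>j<m. d j * u j * w j)"
proof -
  have "qf m (diagm m d) u w = (\<Sum>j<m. \<Sum>l<m. if l = j then u j * d j * w l else 0)"
    unfolding qf_def diagm_def by (intro sum.cong refl) auto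
  also have "\<dots> = (\<Sum>j<m. d j * u j * w j)" by (simp add: mult_ac)
  finally show ?thesis .
qed

lemma qf_bound:
  assumes "\<forall>j<m. \<forall>l<m. \<bar>X$$(j,l)\<bar> \<le> C"
  shows "\<bar>qf m X u w\<bar> \<le> C * n1 m u * n1 m w"
proof -
  have "\<bar>qf m X u w\<bar> \<le> (\<Sum>j<m. \<Sum>l<m. \<bar>u j * X$$(j,l) * w l\<bar>)"
    unfolding qf_def by (rule order_trans[OF sum_abs]) (intro sum_mono sum_abs)
  also have "\<dots> \<le> (\<Sum>j<m. \<Sum>l<m. C * (\<bar>u j\<bar> * \<bar>w l\<bar>))"
  proof (intro sum_mono)
    fix j l assume "j \<in> {..<m}" "l \<in> {..<m}"
    hence "\<bar>X$$(j,l)\<bar> \<le> C" using assms by auto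
    hence "\<bar>u j\<bar> * \<bar>X$$(j,l)\<bar> * \<bar>w l\<bar> \<le> \<bar>u j\<bar> * C * \<bar>w l\<bar>"
      by (intro mult_right_mono mult_left_mono) auto
    thus "\<bar>u j * X$$(j,l) * w l\<bar> \<le> C * (\<bar>u j\<bar> * \<bar>w l\<bar>)" by (simp add: abs_mult mult_ac)
  qed
  also have "\<dots> = C * n1 m u * n1 m w"
    unfolding n1_def by (simp add: sum_distrib_left sum_distrib_right mult_ac)
  finally show ?thesis .
qed

lemma n1_nonneg: "n1 m u \<ge> 0" unfolding n1_def by (simp add: sum_nonneg)

lemma n1_sq: "(n1 m u)^2 \<le> real m * q2 m u"
proof -
  have "(n1 m u)^2 = (\<Sum>j<m. \<Sum>l<m. \<bar>u j\<bar> * \<bar>u l\<bar>)"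
    unfolding n1_def power2_eq_square by (simp add: sum_product)
  also have "\<dots> \<le> (\<Sum>j<m. \<Sum>l<m. ((u j)^2 + (u l)^2) / 2)"
  proof (intro sum_mono)
    fix j l
    have "0 \<le> (\<bar>u j\<bar> - \<bar>u l\<bar>)^2" by simp
    thus "\<bar>u j\<bar> * \<bar>u l\<bar> \<le> ((u j)^2 + (u l)^2) / 2"
      by (simp add: power2_eq_square algebra_simps)
  qed
  also have "\<dots> = real m * q2 m u"
  proof -
    have e: "(\<Sum>j<m. real m * (u j)^2) = real m * q2 m u" by (simp add: q2_def sum_distrib_left)
    show ?thesis unfolding q2_def
      by (simp add: sum.distrib add_divide_distrib sum_divide_distrib[symmetric] e[unfolded q2_def])
  qed
  finally show ?thesis .
qed


lemma inv_det:
  fixes S :: "real mat"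
  assumes Sc: "S \<in> carrier_mat h h" and inv: "invertible_mat S"
  shows "det S \<noteq> 0"
proof -
  obtain B where SB: "S * B = 1\<^sub>m h" and BS: "B * S = 1\<^sub>m (dim_row B)"
  proof -
    from inv obtain B where "inverts_mat S B" "inverts_mat B S"
      unfolding invertible_mat_def by blast
    moreover have "dim_row S = h" using Sc by simp
    ultimately show ?thesis using that unfolding inverts_mat_def by metis
  qed
  have Bc: "B \<in> carrier_mat h h"
  proof -
    have "dim_col B = h" using arg_cong[OF SB, of dim_col] by simp
    moreover have "dim_row B = h" using arg_cong[OF BS, of dim_col] Sc by simp
    ultimately show ?thesis by auto
  qed
  have "det S * det B = 1" using det_mult[OF Sc Bc] SB by simp
  thus ?thesis by auto
qed

lemma mv_entry:
  fixes S :: "'a::comm_ring_1 mat"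
  assumes Sc: "S \<in> carrier_mat h h" and v: "v \<in> carrier_vec h" and i: "i < h"
  shows "(S *\<^sub>v v) $ i = (\<Sum>k<h. S $$ (i,k) * v $ k)"
    and "(transpose_mat S *\<^sub>v v) $ i = (\<Sum>k<h. S $$ (k,i) * v $ k)"
  using Sc v i by (auto simp: scalar_prod_def lessThan_atLeast0 intro!: sum.cong)

lemma Sv_qf:
  fixes h m :: nat and \<gamma> :: "nat \<Rightarrow> nat \<Rightarrow> int" and X :: "real mat" and v :: "real vec"
  defines "M \<equiv> mat h m (\<lambda>(i,j). real_of_int (\<gamma> i j))"
  assumes X: "X \<in> carrier_mat m m" and v: "v \<in> carrier_vec h" and i: "i < h"
  shows "((M * X * transpose_mat M) *\<^sub>v v) $ i = qf m X (\<lambda>j. real_of_int (\<gamma> i j)) (\<lambda>l. \<Sum>k<h. v $ k * real_of_int (\<gamma> k l))"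
    and "(transpose_mat (M * X * transpose_mat M) *\<^sub>v v) $ i = qf m X (\<lambda>l. \<Sum>k<h. v $ k * real_of_int (\<gamma> k l)) (\<lambda>j. real_of_int (\<gamma> i j))"
proof -
  have Mc: "M \<in> carrier_mat h m" unfolding M_def by simp
  have Mt: "transpose_mat M \<in> carrier_mat m h" using Mc by simp
  have Sc: "M * X * transpose_mat M \<in> carrier_mat h h" by (rule mult_carrier_mat[OF mult_carrier_mat[OF Mc X] Mt])
  have ent: "(M * X * transpose_mat M) $$ (a,k) = qf m X (\<lambda>j. real_of_int (\<gamma> a j)) (\<lambda>j. real_of_int (\<gamma> k j))"
    if "a < h" "k < h" for a k
    using entry_PXQ[OF Mc X Mc that] that unfolding qf_def M_def by simp
  have "((M * X * transpose_mat M) *\<^sub>v v) $ i = (\<Sum>k<h. (M * X * transpose_mat M) $$ (i,k) * v $ k)"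
    by (rule mv_entry(1)[OF Sc v i])
  also have "\<dots> = (\<Sum>k<h. v $ k * qf m X (\<lambda>j. real_of_int (\<gamma> i j)) (\<lambda>j. real_of_int (\<gamma> k j)))"
    using i by (intro sum.cong refl) (simp add: ent)
  also have "\<dots> = qf m X (\<lambda>j. real_of_int (\<gamma> i j)) (\<lambda>l. \<Sum>k<h. v $ k * real_of_int (\<gamma> k l))"
    by (rule qf_comb2[symmetric])
  finally show "((M * X * transpose_mat M) *\<^sub>v v) $ i = qf m X (\<lambda>j. real_of_int (\<gamma> i j)) (\<lambda>l. \<Sum>k<h. v $ k * real_of_int (\<gamma> k l))" .
  have "(transpose_mat (M * X * transpose_mat M) *\<^sub>v v) $ i = (\<Sum>k<h. (M * X * transpose_mat M) $$ (k,i) * v $ k)"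
    by (rule mv_entry(2)[OF Sc v i])
  also have "\<dots> = (\<Sum>k<h. v $ k * qf m X (\<lambda>j. real_of_int (\<gamma> k j)) (\<lambda>j. real_of_int (\<gamma> i j)))"
    using i by (intro sum.cong refl) (simp add: ent)
  also have "\<dots> = qf m X (\<lambda>l. \<Sum>k<h. v $ k * real_of_int (\<gamma> k l)) (\<lambda>j. real_of_int (\<gamma> i j))"
    by (rule qf_comb1[symmetric])
  finally show "(transpose_mat (M * X * transpose_mat M) *\<^sub>v v) $ i = qf m X (\<lambda>l. \<Sum>k<h. v $ k * real_of_int (\<gamma> k l)) (\<lambda>j. real_of_int (\<gamma> i j))" .
qed

lemma detY_nonzero:
  fixes h m :: nat and \<gamma> :: "nat \<Rightarrow> nat \<Rightarrow> int" and X0 :: "real mat" and d :: "nat \<Rightarrow> real"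
  defines "M \<equiv> mat h m (\<lambda>(i,j). real_of_int (\<gamma> i j))"
  assumes X0: "X0 \<in> carrier_mat m m" and d0: "det (M * X0 * transpose_mat M) \<noteq> 0"
    and dpos: "\<forall>j<m. d j > 0"
  shows "det (M * diagm m d * transpose_mat M) \<noteq> 0"
proof
  have Mc: "M \<in> carrier_mat h m" unfolding M_def by simp
  have Mt: "transpose_mat M \<in> carrier_mat m h" using Mc by simp
  have Dc: "diagm m d \<in> carrier_mat m m" unfolding diagm_def by simp
  have Sc: "M * diagm m d * transpose_mat M \<in> carrier_mat h h" by (rule mult_carrier_mat[OF mult_carrier_mat[OF Mc Dc] Mt])
  have S0c: "M * X0 * transpose_mat M \<in> carrier_mat h h" by (rule mult_carrier_mat[OF mult_carrier_mat[OF Mc X0] Mt])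
  assume "det (M * diagm m d * transpose_mat M) = 0"
  then obtain v where v: "v \<in> carrier_vec h" and v0: "v \<noteq> 0\<^sub>v h" and Sv: "(M * diagm m d * transpose_mat M) *\<^sub>v v = 0\<^sub>v h"
    unfolding det_0_iff_vec_prod_zero[OF Sc] by blast
  define u where "u l = (\<Sum>k<h. v $ k * real_of_int (\<gamma> k l))" for l
  have "0 = (\<Sum>i<h. v $ i * ((M * diagm m d * transpose_mat M) *\<^sub>v v) $ i)"
    using Sv by simp
  also have "\<dots> = (\<Sum>i<h. v $ i * qf m (diagm m d) (\<lambda>j. real_of_int (\<gamma> i j)) u)"
    using Sv_qf(1)[OF Dc v, of _ \<gamma>] unfolding M_def u_def by (intro sum.cong refl) simp
  also have "\<dots> = qf m (diagm m d) u u"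
    unfolding u_def by (rule qf_comb1[symmetric])
  also have "\<dots> = (\<Sum>j<m. d j * (u j)^2)" by (simp add: qf_diag power2_eq_square mult_ac)
  finally have s0: "(\<Sum>j<m. d j * (u j)^2) = 0" by simp
  have u0: "\<forall>j<m. u j = 0"
  proof (intro allI impI)
    fix j assume j: "j < m"
    have "\<forall>j\<in>{..<m}. d j * (u j)^2 = 0"
      using sum_nonneg_eq_0_iff[of "{..<m}" "\<lambda>j. d j * (u j)^2"] s0 dpos
      by (simp add: less_imp_le)
    hence "d j = 0 \<or> u j = 0" using j by auto
    thus "u j = 0" using j dpos by force
  qed
  have "transpose_mat (M * X0 * transpose_mat M) *\<^sub>v v = 0\<^sub>v h"
  proof (rule eq_vecI)
    fix i assume "i < dim_vec (0\<^sub>v h :: real vec)"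
    hence i: "i < h" by simp
    have "(transpose_mat (M * X0 * transpose_mat M) *\<^sub>v v) $ i = qf m X0 u (\<lambda>j. real_of_int (\<gamma> i j))"
      using Sv_qf(2)[OF X0 v i, of \<gamma>] unfolding M_def u_def by simp
    also have "\<dots> = qf m X0 (\<lambda>_. 0) (\<lambda>j. real_of_int (\<gamma> i j))"
      by (rule qf_cong) (use u0 in auto)
    also have "\<dots> = 0" by (simp add: qf_def)
    finally show "(transpose_mat (M * X0 * transpose_mat M) *\<^sub>v v) $ i = 0\<^sub>v h $ i" using i by simp
  qed (use Mc in simp)
  moreover have S0t: "transpose_mat (M * X0 * transpose_mat M) \<in> carrier_mat h h" using S0c by simp
  ultimately have "det (transpose_mat (M * X0 * transpose_mat M)) = 0"
    unfolding det_0_iff_vec_prod_zero[OF S0t] using v v0 by blast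
  thus False using d0 det_transpose[OF S0c] by simp
qed

lemma bdry_diff: "bdry m hed tal (\<lambda>j. a j - b j) v = bdry m hed tal a v - bdry m hed tal b v"
  unfolding bdry_alt by (simp add: sum_subtractf left_diff_distrib)

lemma bdry_comb: "bdry m hed tal (\<lambda>j. \<Sum>k<h. c k * g k j) v = (\<Sum>k<h. c k * bdry m hed tal (g k) v)"
proof -
  have "bdry m hed tal (\<lambda>j. \<Sum>k<h. c k * g k j) v = (\<Sum>j<m. \<Sum>k<h. c k * (g k j * (of_bool (hed j = v) - of_bool (tal j = v))))"
    unfolding bdry_alt by (simp add: sum_distrib_right mult.assoc)
  also have "\<dots> = (\<Sum>k<h. \<Sum>j<m. c k * (g k j * (of_bool (hed j = v) - of_bool (tal j = v))))"
    by (rule sum.swap)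
  also have "\<dots> = (\<Sum>k<h. c k * bdry m hed tal (g k) v)"
    unfolding bdry_alt by (simp add: sum_distrib_left)
  finally show ?thesis .
qed

lemma bdry_of_int: "bdry m hed tal (\<lambda>j. real_of_int (z j)) v = real_of_int (bdry m hed tal z v)"
  unfolding bdry_alt by simp

theorem theorem1p1:
  fixes n m :: nat and hed tal :: "nat \<Rightarrow> nat"
    and \<gamma> :: "nat \<Rightarrow> nat \<Rightarrow> int" and p \<omega> :: "nat \<Rightarrow> real"
    and y :: "nat \<Rightarrow> 's::topological_space \<Rightarrow> real" and A :: "'s \<Rightarrow> real mat"
    and C :: real
  defines "h \<equiv> m + 1 - n"
  defines "M \<equiv> mat h m (\<lambda>(i,j). real_of_int (\<gamma> i j))"
  defines "N \<equiv> mat (h + 1) m (\<lambda>(i,j). if i < h then real_of_int (\<gamma> i j) else \<omega> j)"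
  defines "Y \<equiv> (\<lambda>s. diagm m (\<lambda>j. y j s))"
  assumes n_pos: "n \<ge> 1"
    and edges: "\<forall>j<m. hed j < n \<and> tal j < n"
    and conn: "graph_connected n m hed tal"
    and basis: "is_H1_basis n m hed tal h \<gamma>"
    and p_nz: "\<exists>v<n. p v \<noteq> 0"
    and p_sum: "(\<Sum>v<n. p v) = 0"
    and omega: "\<forall>v<n. bdry m hed tal \<omega> v = p v"
    and y_cont: "\<forall>j<m. continuous_on UNIV (y j)"
    and y_pos: "\<forall>j<m. \<forall>s. y j s > 0"
    and A_dim: "\<forall>s. A s \<in> carrier_mat m m"
    and C_pos: "C > 0"
    and A_bdd: "\<forall>s. \<forall>i<m. \<forall>j<m. \<bar>A s $$ (i,j)\<bar> \<le> C"
    and invM: "\<forall>s. invertible_mat (M * (Y s + A s) * transpose_mat M)"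
    and invN: "\<forall>s. invertible_mat (N * (Y s + A s) * transpose_mat N)"
  shows "\<exists>c C'. c > 0 \<and> C' > 0 \<and>
    (\<forall>s. (\<forall>j<m. y j s \<ge> C') \<longrightarrow>
       \<bar>det (N * (Y s + A s) * transpose_mat N) / det (M * (Y s + A s) * transpose_mat M)
        - det (N * Y s * transpose_mat N) / det (M * Y s * transpose_mat M)\<bar> \<le> c * 1)"
proof -
  define P where "P = (\<Sum>v<n. \<bar>p v\<bar>)"
  have P0: "P \<ge> 0" unfolding P_def by (simp add: sum_nonneg)
  define K where "K = real m * P"
  have K0: "K \<ge> 0" unfolding K_def using P0 by simp
  define C' where "C' = C * real m + 1"
  define c where "c = C * K * K + C * K * (real m * C * K) + 1"
  have Mc: "M \<in> carrier_mat h m" unfolding M_def by simp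
  have Mt: "transpose_mat M \<in> carrier_mat m h" using Mc by simp
  have span: "\<forall>z. is_cycle n m hed tal z \<longrightarrow> (\<exists>c::nat\<Rightarrow>int. \<forall>j<m. z j = (\<Sum>i<h. c i * \<gamma> i j))"
    using basis unfolding is_H1_basis_def by blast
  have gcyc: "\<forall>i<h. \<forall>v<n. bdry m hed tal (\<gamma> i) v = 0"
    using basis unfolding is_H1_basis_def is_cycle_def by blast
  have Yc: "Y s \<in> carrier_mat m m" for s unfolding Y_def diagm_def by simp
  have detS: "det (M * (Y s + A s) * transpose_mat M) \<noteq> 0" for s
    by (rule inv_det[OF _ invM[rule_format]])
       (rule mult_carrier_mat[OF mult_carrier_mat[OF Mc add_carrier_mat[OF A_dim[rule_format]]] Mt])
  have detY: "det (M * Y s * transpose_mat M) \<noteq> 0" for s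
    unfolding Y_def M_def
    by (rule detY_nonzero[OF add_carrier_mat[OF A_dim[rule_format]] detS[of undefined, unfolded M_def]])
       (use y_pos in auto)
  have "0 \<le> C * K * K + C * K * (real m * C * K)"
    using C_pos K0 by (intro add_nonneg_nonneg mult_nonneg_nonneg) auto
  hence "c > 0" unfolding c_def by linarith
  moreover have "C' > 0"
  proof -
    have "0 \<le> C * real m" using C_pos by simp
    thus ?thesis unfolding C'_def by linarith
  qed
  moreover have "\<bar>det (N * (Y s + A s) * transpose_mat N) / det (M * (Y s + A s) * transpose_mat M)
        - det (N * Y s * transpose_mat N) / det (M * Y s * transpose_mat M)\<bar> \<le> c * 1"
    if yC: "\<forall>j<m. y j s \<ge> C'" for s
  proof -
    define Ys where "Ys = Y s"
    define As where "As = A s"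
    define X where "X = Ys + As"
    have Ysc: "Ys \<in> carrier_mat m m" unfolding Ys_def by (rule Yc)
    have Asc: "As \<in> carrier_mat m m" unfolding As_def using A_dim by simp
    have Xc: "X \<in> carrier_mat m m" unfolding X_def using Ysc Asc by simp
    have Ybnd: "\<forall>j<m. \<forall>l<m. \<bar>As$$(j,l)\<bar> \<le> C" unfolding As_def using A_bdd by simp
    define gi where "gi i = (\<lambda>j. real_of_int (\<gamma> i j))" for i
    obtain lamX where lamX: "\<forall>i<h. (\<Sum>j<m. \<Sum>l<m. real_of_int (\<gamma> i j) * X$$(j,l) * (\<omega> l - (\<Sum>k<h. lamX k * real_of_int (\<gamma> k l)))) = 0"
      using exists_opt[OF Xc detS[of s, unfolded M_def X_def[symmetric] Ys_def[symmetric] As_def[symmetric]]] by blast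
    obtain lamY where lamY: "\<forall>i<h. (\<Sum>j<m. \<Sum>l<m. real_of_int (\<gamma> i j) * Ys$$(j,l) * (\<omega> l - (\<Sum>k<h. lamY k * real_of_int (\<gamma> k l)))) = 0"
      using exists_opt[OF Ysc detY[of s, unfolded M_def Ys_def[symmetric]]] by blast
    define xX where "xX l = \<omega> l - (\<Sum>k<h. lamX k * real_of_int (\<gamma> k l))" for l
    define xY where "xY l = \<omega> l - (\<Sum>k<h. lamY k * real_of_int (\<gamma> k l))" for l
    have orthX: "\<forall>i<h. qf m X (gi i) xX = 0" using lamX unfolding qf_def gi_def xX_def by simp
    have orthY: "\<forall>i<h. qf m Ys (gi i) xY = 0" using lamY unfolding qf_def gi_def xY_def by simp
    have RX: "det (N * X * transpose_mat N) = det (M * X * transpose_mat M) * qf m X xX xX"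
      unfolding M_def N_def qf_def
      by (rule det_schur[OF Xc]) (use lamX in \<open>auto simp: xX_def\<close>)
    have RY: "det (N * Ys * transpose_mat N) = det (M * Ys * transpose_mat M) * qf m Ys xY xY"
      unfolding M_def N_def qf_def
      by (rule det_schur[OF Ysc]) (use lamY in \<open>auto simp: xY_def\<close>)
    have ratX: "det (N * X * transpose_mat N) / det (M * X * transpose_mat M) = qf m X xX xX"
      using RX detS[of s] unfolding X_def Ys_def As_def by simp
    have ratY: "det (N * Ys * transpose_mat N) / det (M * Ys * transpose_mat M) = qf m Ys xY xY"
      using RY detY[of s] unfolding Ys_def by simp
    have Ysdiag: "Ys = diagm m (\<lambda>j. y j s)" unfolding Ys_def Y_def by simp
    have xYb: "\<bar>xY j\<bar> \<le> P" if j: "j < m" for j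
      unfolding P_def
    proof (rule flow_bound[OF edges span _ _ _ j, of "\<lambda>j. y j s"])
      show "\<forall>i<h. (\<Sum>j<m. y j s * xY j * real_of_int (\<gamma> i j)) = 0"
      proof (intro allI impI)
        fix i assume i: "i < h"
        have "qf m Ys (gi i) xY = (\<Sum>j<m. y j s * xY j * real_of_int (\<gamma> i j))"
          unfolding Ysdiag qf_diag gi_def by (simp add: mult_ac)
        thus "(\<Sum>j<m. y j s * xY j * real_of_int (\<gamma> i j)) = 0" using orthY i by simp
      qed
      show "\<forall>j<m. 0 < y j s" using y_pos by simp
      show "\<forall>v<n. bdry m hed tal xY v = p v"
      proof (intro allI impI)
        fix v assume v: "v < n"
        have "bdry m hed tal xY v = bdry m hed tal \<omega> v - (\<Sum>k<h. lamY k * bdry m hed tal (\<lambda>j. real_of_int (\<gamma> k j)) v)"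
          unfolding xY_def bdry_diff bdry_comb ..
        also have "(\<Sum>k<h. lamY k * bdry m hed tal (\<lambda>j. real_of_int (\<gamma> k j)) v) = 0"
          using gcyc v by (simp add: bdry_of_int)
        finally show "bdry m hed tal xY v = p v" using omega v by simp
      qed
    qed
    have n1x: "n1 m xY \<le> K"
    proof -
      have "n1 m xY \<le> (\<Sum>j<m. P)" unfolding n1_def by (rule sum_mono) (use xYb in auto)
      thus ?thesis unfolding K_def by simp
    qed
    define \<delta> where "\<delta> j = xX j - xY j" for j
    have dcomb: "\<forall>j<m. \<delta> j = (\<Sum>i<h. (lamY i - lamX i) * gi i j)"
      unfolding \<delta>_def xX_def xY_def gi_def by (simp add: left_diff_distrib sum_subtractf)
    have xXe: "xX = (\<lambda>j. xY j + \<delta> j)" unfolding \<delta>_def by auto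
    have qfX: "qf m X u w = qf m Ys u w + qf m As u w" for u w
      unfolding X_def by (rule qf_addM[OF Ysc Asc])
    have a: "qf m X \<delta> xX = 0"
    proof -
      have "qf m X \<delta> xX = qf m X (\<lambda>j. \<Sum>i<h. (lamY i - lamX i) * gi i j) xX"
        by (rule qf_cong) (use dcomb in auto)
      also have "\<dots> = (\<Sum>i<h. (lamY i - lamX i) * qf m X (gi i) xX)" by (rule qf_comb1)
      also have "\<dots> = 0" using orthX by simp
      finally show ?thesis .
    qed
    have symY: "qf m Ys u w = qf m Ys w u" for u w
      unfolding Ysdiag qf_diag by (simp add: mult_ac)
    have b: "qf m Ys \<delta> xY = 0"
    proof -
      have "qf m Ys \<delta> xY = qf m Ys (\<lambda>j. \<Sum>i<h. (lamY i - lamX i) * gi i j) xY"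
        by (rule qf_cong) (use dcomb in auto)
      also have "\<dots> = (\<Sum>i<h. (lamY i - lamX i) * qf m Ys (gi i) xY)" by (rule qf_comb1)
      also have "\<dots> = 0" using orthY by simp
      finally show ?thesis .
    qed
    have b': "qf m Ys xY \<delta> = 0" using b symY by simp
    have diff: "qf m X xX xX - qf m Ys xY xY = qf m As xY xY + qf m As xY \<delta>"
    proof -
      have "qf m X xX xX = qf m X xY xX + qf m X \<delta> xX"
        by (subst (1) xXe) (rule qf_add1)
      also have "\<dots> = qf m X xY xX" using a by simp
      also have "\<dots> = qf m X xY xY + qf m X xY \<delta>"
        by (subst xXe) (rule qf_add2)
      finally show ?thesis using qfX[of xY xY] qfX[of xY \<delta>] b' by simp
    qed
    have ddup: "qf m X \<delta> \<delta> = - qf m As \<delta> xY"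
    proof -
      have "0 = qf m X \<delta> xY + qf m X \<delta> \<delta>"
        using a by (subst (asm) xXe) (simp add: qf_add2)
      thus ?thesis using qfX[of \<delta> xY] b by simp
    qed
    have dlow: "q2 m \<delta> \<le> qf m X \<delta> \<delta>"
    proof -
      have "qf m Ys \<delta> \<delta> = (\<Sum>j<m. y j s * \<delta> j * \<delta> j)" unfolding Ysdiag qf_diag ..
      also have "\<dots> \<ge> (\<Sum>j<m. C' * (\<delta> j)^2)"
      proof (rule sum_mono)
        fix j assume "j \<in> {..<m}"
        hence "y j s \<ge> C'" using yC by simp
        thus "C' * (\<delta> j)^2 \<le> y j s * \<delta> j * \<delta> j"
          by (simp add: power2_eq_square mult.assoc mult_right_mono)
      qed
      finally have e1: "qf m Ys \<delta> \<delta> \<ge> C' * q2 m \<delta>" unfolding q2_def by (simp add: sum_distrib_left)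
      have "\<bar>qf m As \<delta> \<delta>\<bar> \<le> C * n1 m \<delta> * n1 m \<delta>" by (rule qf_bound[OF Ybnd])
      also have "\<dots> = C * (n1 m \<delta>)^2" by (simp add: power2_eq_square)
      also have "\<dots> \<le> C * (real m * q2 m \<delta>)" using C_pos n1_sq by (simp add: mult_left_mono)
      finally have e2: "qf m As \<delta> \<delta> \<ge> - (C * real m * q2 m \<delta>)" by simp
      have "qf m X \<delta> \<delta> \<ge> C' * q2 m \<delta> - C * real m * q2 m \<delta>" using qfX[of \<delta> \<delta>] e1 e2 by simp
      thus ?thesis unfolding C'_def by (simp add: algebra_simps)
    qed
    have dup: "qf m X \<delta> \<delta> \<le> C * n1 m \<delta> * K"
    proof -
      have "qf m X \<delta> \<delta> \<le> \<bar>qf m As \<delta> xY\<bar>" using ddup by simp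
      also have "\<dots> \<le> C * n1 m \<delta> * n1 m xY" by (rule qf_bound[OF Ybnd])
      also have "\<dots> \<le> C * n1 m \<delta> * K"
        using n1x C_pos n1_nonneg[of m \<delta>] by (simp add: mult_left_mono)
      finally show ?thesis .
    qed
    have n1d: "n1 m \<delta> \<le> real m * C * K"
    proof (cases "n1 m \<delta> = 0")
      case True thus ?thesis using C_pos K0 by simp
    next
      case False
      hence pos: "n1 m \<delta> > 0" using n1_nonneg[of m \<delta>] by simp
      have "n1 m \<delta> * n1 m \<delta> \<le> real m * q2 m \<delta>" using n1_sq[of m \<delta>] by (simp add: power2_eq_square)
      also have "\<dots> \<le> real m * (C * n1 m \<delta> * K)" using dlow dup by (simp add: mult_left_mono)
      also have "\<dots> = (real m * C * K) * n1 m \<delta>" by simp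
      finally show ?thesis using pos by simp
    qed
    have "\<bar>qf m As xY xY + qf m As xY \<delta>\<bar> \<le> C * n1 m xY * n1 m xY + C * n1 m xY * n1 m \<delta>"
      using qf_bound[OF Ybnd, of xY xY] qf_bound[OF Ybnd, of xY \<delta>] by simp
    also have "\<dots> \<le> C * K * K + C * K * (real m * C * K)"
    proof (intro add_mono)
      show "C * n1 m xY * n1 m xY \<le> C * K * K"
        using n1x n1_nonneg[of m xY] C_pos by (intro mult_mono) auto
      show "C * n1 m xY * n1 m \<delta> \<le> C * K * (real m * C * K)"
        using n1x n1d n1_nonneg[of m xY] n1_nonneg[of m \<delta>] C_pos K0 by (intro mult_mono) auto
    qed
    also have "\<dots> \<le> c * 1" unfolding c_def by simp
    finally have "\<bar>qf m X xX xX - qf m Ys xY xY\<bar> \<le> c * 1" using diff by simp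
    thus ?thesis using ratX ratY unfolding X_def Ys_def As_def by simp
  qed
  ultimately show ?thesis by blast
qed


end
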